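(* Let $\alpha\approx1.465571$ be the real root of $x^3-x^2-1$ lying between $1$ and $2$. Every graph of pathwidth at most $1$ and order $n$ has at most $\alpha^n$ induced matchings. Moreover, the number of induced matchings of the path on $n$ vertices is at least $0.89\,\alpha^n+o(1)$; in particular it is $\Theta(\alpha^n)$.
   Context: An induced matching of a graph $G=(V,E)$ is here a set $D\subseteq V$ such that every vertex of $D$ has exactly one neighbour in $D$ (equivalently, the set of edges of $G[D]$ is a matching whose vertex set is $D$ and which is an induced subgraph); i.e. a $(\{1\},\mathbb{N})$-dominating set, where $D$ is $(\sigma,\rho)$-dominating if $|N(v)\cap D|\in\sigma$ for $v\in D$ and $|N(v)\cap D|\in\rho$ for $v\notin D$. The empty set counts. Order = number of vertices; pathwidth is the standard notion. *)

theory Defs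
  imports Complex_Main "HOL-Library.Landau_Symbols"
begin

definition simple_graph :: "'a set \<Rightarrow> 'a set set \<Rightarrow> bool" where
  "simple_graph V E \<longleftrightarrow> finite V \<and>
     (\<forall>e\<in>E. \<exists>u v. u \<noteq> v \<and> e = {u, v} \<and> u \<in> V \<and> v \<in> V)"

definition nbhd :: "'a set set \<Rightarrow> 'a \<Rightarrow> 'a set" where
  "nbhd E v = {u. {u, v} \<in> E}"

definition sigma_rho_dominating ::
  "nat set \<Rightarrow> nat set \<Rightarrow> 'a set \<Rightarrow> 'a set set \<Rightarrow> 'a set \<Rightarrow> bool" where
  "sigma_rho_dominating \<sigma> \<rho> V E D \<longleftrightarrow> D \<subseteq> V \<and>
     (\<forall>v\<in>D. card (nbhd E v \<inter> D) \<in> \<sigma>) \<and>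
     (\<forall>v\<in>V - D. card (nbhd E v \<inter> D) \<in> \<rho>)"

definition induced_matching :: "'a set \<Rightarrow> 'a set set \<Rightarrow> 'a set \<Rightarrow> bool" where
  "induced_matching V E D \<longleftrightarrow> sigma_rho_dominating {1} UNIV V E D"

definition num_induced_matchings :: "'a set \<Rightarrow> 'a set set \<Rightarrow> nat" where
  "num_induced_matchings V E = card {D. induced_matching V E D}"

definition path_decomposition :: "'a set \<Rightarrow> 'a set set \<Rightarrow> 'a set list \<Rightarrow> bool" where
  "path_decomposition V E Bs \<longleftrightarrow>
     (\<forall>B\<in>set Bs. B \<subseteq> V) \<and>
     (\<forall>v\<in>V. \<exists>i<length Bs. v \<in> Bs ! i) \<and>
     (\<forall>e\<in>E. \<exists>i<length Bs. e \<subseteq> Bs ! i) \<and>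
     (\<forall>v i j k. i \<le> j \<and> j \<le> k \<and> k < length Bs \<and> v \<in> Bs ! i \<and> v \<in> Bs ! k
        \<longrightarrow> v \<in> Bs ! j)"

definition pathwidth :: "'a set \<Rightarrow> 'a set set \<Rightarrow> nat" where
  "pathwidth V E = (LEAST k. \<exists>Bs. path_decomposition V E Bs \<and> (\<forall>B\<in>set Bs. card B \<le> k + 1))"

definition path_V :: "nat \<Rightarrow> nat set" where
  "path_V n = {0..<n}"

definition path_E :: "nat \<Rightarrow> nat set set" where
  "path_E n = {{i, Suc i} | i. Suc i < n}"

end

theory Submission
  imports Defs
begin

definition IM :: "'a set set \<Rightarrow> 'a set \<Rightarrow> 'a set set" where
  "IM E S = {D. D \<subseteq> S \<and> (\<forall>v\<in>D. card (nbhd E v \<inter> D) = 1)}"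

lemma nbhd_sym: "u \<in> nbhd E w \<longleftrightarrow> w \<in> nbhd E u"
  by (simp add: nbhd_def insert_commute)

lemma IM_finite: "finite S \<Longrightarrow> finite (IM E S)"
  by (rule finite_subset[of _ "Pow S"]) (auto simp: IM_def)

lemma IM_empty: "IM E {} = {{}}"
  by (auto simp: IM_def)

lemma IM_split:
  assumes "finite S"
  shows "card (IM E S) = card (IM E (S - {v})) + card {D\<in>IM E S. v \<in> D}"
proof -
  have eq: "IM E S = IM E (S - {v}) \<union> {D\<in>IM E S. v \<in> D}"
    by (auto simp: IM_def)
  have "IM E (S - {v}) \<inter> {D\<in>IM E S. v \<in> D} = {}" by (auto simp: IM_def)
  then show ?thesis
    by (subst eq, subst card_Un_disjoint) (auto intro: IM_finite assms finite_subset[OF _ IM_finite[OF assms]])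
qed

lemma card1_mem: "card X = 1 \<Longrightarrow> a \<in> X \<Longrightarrow> b \<in> X \<Longrightarrow> a = b"
  by (metis card_1_singletonE singletonD)

lemma IM_pair:
  assumes loop: "\<forall>x. {x} \<notin> E" and uS: "u \<in> S" and vS: "v \<in> S" and e: "{u,v} \<in> E"
  shows "card {D\<in>IM E S. u \<in> D \<and> v \<in> D} =
         card (IM E (S - (insert u (nbhd E u) \<union> insert v (nbhd E v))))"
proof -
  have uv: "u \<in> nbhd E v" "v \<in> nbhd E u" using e by (auto simp: nbhd_def insert_commute)
  have nl: "x \<notin> nbhd E x" for x using loop by (auto simp: nbhd_def)
  show ?thesis
  proof (rule bij_betw_same_card[of "\<lambda>D. D - {u,v}"], rule bij_betw_byWitness[where f'="\<lambda>D. D \<union> {u,v}"])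
    show "\<forall>D\<in>{D\<in>IM E S. u \<in> D \<and> v \<in> D}. D - {u,v} \<union> {u,v} = D" by auto
    show "\<forall>D\<in>IM E (S - (insert u (nbhd E u) \<union> insert v (nbhd E v))). D \<union> {u,v} - {u,v} = D"
      by (auto simp: IM_def)
    show "(\<lambda>D. D - {u,v}) ` {D\<in>IM E S. u \<in> D \<and> v \<in> D} \<subseteq> IM E (S - (insert u (nbhd E u) \<union> insert v (nbhd E v)))"
    proof safe
      fix D assume D: "D \<in> IM E S" "u \<in> D" "v \<in> D"
      have cu: "card (nbhd E u \<inter> D) = 1" and cv: "card (nbhd E v \<inter> D) = 1" using D by (auto simp: IM_def)
      have Nu: "w \<in> D \<Longrightarrow> w \<in> nbhd E u \<Longrightarrow> w = v" for w using card1_mem[OF cu, of w v] uv D by auto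
      have Nv: "w \<in> D \<Longrightarrow> w \<in> nbhd E v \<Longrightarrow> w = u" for w using card1_mem[OF cv, of w u] uv D by auto
      show "D - {u,v} \<in> IM E (S - (insert u (nbhd E u) \<union> insert v (nbhd E v)))"
        unfolding IM_def
      proof (intro CollectI conjI ballI)
        fix w assume w0: "w \<in> D - {u,v}"
        then have w: "w \<in> D" "w \<notin> {u,v}" by auto
        have "nbhd E w \<inter> (D - {u,v}) = nbhd E w \<inter> D"
        proof -
          have "u \<notin> nbhd E w" using Nu[of w] w nbhd_sym by fastforce
          moreover have "v \<notin> nbhd E w" using Nv[of w] w nbhd_sym by fastforce
          ultimately show ?thesis by blast
        qed
        then show "card (nbhd E w \<inter> (D - {u,v})) = 1" using D w by (simp add: IM_def)
      next
        show "D - {u,v} \<subseteq> S - (insert u (nbhd E u) \<union> insert v (nbhd E v))"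
        proof
          fix w assume "w \<in> D - {u,v}"
          then show "w \<in> S - (insert u (nbhd E u) \<union> insert v (nbhd E v))"
            using D Nu[of w] Nv[of w] by (auto simp: IM_def)
        qed
      qed
    qed
    show "(\<lambda>D. D \<union> {u,v}) ` IM E (S - (insert u (nbhd E u) \<union> insert v (nbhd E v))) \<subseteq> {D\<in>IM E S. u \<in> D \<and> v \<in> D}"
    proof (intro subsetI, elim imageE)
      fix x D assume xD: "x = D \<union> {u,v}" and D: "D \<in> IM E (S - (insert u (nbhd E u) \<union> insert v (nbhd E v)))"
      have Dsub: "D \<subseteq> S" and Du: "\<And>w. w \<in> D \<Longrightarrow> w \<notin> nbhd E u \<and> w \<notin> nbhd E v \<and> w \<noteq> u \<and> w \<noteq> v"
        and Dc: "\<And>w. w \<in> D \<Longrightarrow> card (nbhd E w \<inter> D) = 1" using D by (auto simp: IM_def)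
      have "D \<union> {u,v} \<in> IM E S" unfolding IM_def
      proof (intro CollectI conjI ballI)
        show "D \<union> {u,v} \<subseteq> S" using Dsub uS vS by auto
      next
        fix w assume w: "w \<in> D \<union> {u,v}"
        show "card (nbhd E w \<inter> (D \<union> {u,v})) = 1"
        proof (cases "w \<in> D")
          case True
          have "nbhd E w \<inter> (D \<union> {u,v}) = nbhd E w \<inter> D"
            using Du[OF True] by (auto simp: nbhd_sym)
          then show ?thesis using Dc[OF True] by simp
        next
          case False
          then have "w = u \<or> w = v" using w by auto
          then show ?thesis
          proof
            assume "w = u"
            then have "nbhd E w \<inter> (D \<union> {u,v}) = {v}" using Du uv nl[of u] by auto
            then show ?thesis by simp
          next
            assume "w = v"
            then have "nbhd E w \<inter> (D \<union> {u,v}) = {u}" using Du uv nl[of v] by auto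
            then show ?thesis by simp
          qed
        qed
      qed
      then show "x \<in> {D\<in>IM E S. u \<in> D \<and> v \<in> D}" using xD by auto
    qed
  qed
qed

lemma forest_bound:
  fixes \<alpha> :: real
  assumes a1: "1 < \<alpha>" and a3: "\<alpha>^3 = \<alpha>^2 + 1" and a2: "2 \<le> \<alpha>^2"
    and loop: "\<forall>x. {x} \<notin> E"
    and H: "\<And>T. T \<subseteq> S0 \<Longrightarrow> T \<noteq> {} \<Longrightarrow> \<exists>v\<in>T. \<forall>a\<in>nbhd E v \<inter> T. \<forall>b\<in>nbhd E v \<inter> T. a = b"
  shows "finite S \<Longrightarrow> S \<subseteq> S0 \<Longrightarrow> real (card (IM E S)) \<le> \<alpha> ^ card S"
proof (induction "card S" arbitrary: S rule: less_induct)
  case less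
  note fin = less.prems(1)
  have mono: "\<And>i j. i \<le> j \<Longrightarrow> \<alpha>^i \<le> \<alpha>^j" using a1 by (simp add: power_increasing)
  have IH: "\<And>T. T \<subseteq> S \<Longrightarrow> card T < card S \<Longrightarrow> real (card (IM E T)) \<le> \<alpha> ^ card T"
    using less fin by (meson finite_subset order_trans)
  show ?case
  proof (cases "S = {}")
    case True then show ?thesis by (simp add: IM_empty)
  next
    case False
    then obtain v where vS: "v \<in> S" and deg: "\<forall>a\<in>nbhd E v \<inter> S. \<forall>b\<in>nbhd E v \<inter> S. a = b"
      using H less.prems(2) by blast
    have cS: "card S = Suc (card (S - {v}))" using card_Suc_Diff1[OF fin vS] by simp
    have first: "real (card (IM E (S - {v}))) \<le> \<alpha> ^ card (S - {v})"
      by (rule IH) (use cS in auto)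
    have sp: "card (IM E S) = card (IM E (S - {v})) + card {D\<in>IM E S. v \<in> D}"
      by (rule IM_split[OF fin])
    show ?thesis
    proof (cases "nbhd E v \<inter> S = {}")
      case True
      have "{D\<in>IM E S. v \<in> D} = {}"
      proof safe
        fix D assume D: "D \<in> IM E S" "v \<in> D"
        then have "nbhd E v \<inter> D = {}" using True by (auto simp: IM_def)
        with D show "D \<in> {}" by (auto simp: IM_def)
      qed
      then have "card (IM E S) = card (IM E (S - {v}))" using sp by (metis card.empty add_0_right)
      then show ?thesis using first mono[of "card (S - {v})" "card S"] cS by simp
    next
      case False
      then obtain u where uN: "u \<in> nbhd E v" and uS: "u \<in> S" by auto
      have Nv: "nbhd E v \<inter> S = {u}" using deg uN uS by auto
      have e: "{u,v} \<in> E" using uN by (simp add: nbhd_def)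
      have uv: "u \<noteq> v" using e loop by auto
      have vN: "v \<in> nbhd E u" using uN nbhd_sym by metis
      have sec: "{D\<in>IM E S. v \<in> D} = {D\<in>IM E S. u \<in> D \<and> v \<in> D}"
      proof safe
        fix D assume D: "D \<in> IM E S" "v \<in> D"
        then have "card (nbhd E v \<inter> D) = 1" "D \<subseteq> S" by (auto simp: IM_def)
        then have "nbhd E v \<inter> D \<noteq> {}" by auto
        then show "u \<in> D" using Nv \<open>D \<subseteq> S\<close> by auto
      qed
      define T where "T = S - (insert u (nbhd E u) \<union> insert v (nbhd E v))"
      have cT: "card {D\<in>IM E S. v \<in> D} = card (IM E T)"
        unfolding sec T_def by (rule IM_pair[OF loop uS vS e])
      show ?thesis
      proof (cases "nbhd E u \<inter> S \<subseteq> {v}")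
        case True
        have T2: "T = S - {u,v}" unfolding T_def using True Nv by auto
        have IMeq: "IM E (S - {v}) = IM E (S - {u,v})"
        proof (rule set_eqI, rule iffI)
          fix D assume D: "D \<in> IM E (S - {v})"
          have "u \<notin> D"
          proof
            assume "u \<in> D"
            then have "card (nbhd E u \<inter> D) = 1" using D by (auto simp: IM_def)
            moreover have "nbhd E u \<inter> D = {}" using D True by (auto simp: IM_def)
            ultimately show False by simp
          qed
          then show "D \<in> IM E (S - {u,v})" using D by (auto simp: IM_def)
        qed (auto simp: IM_def)
        have c2: "card S = Suc (Suc (card (S - {u,v})))"
        proof -
          have "card (S - {u,v}) = card S - 2" using uS vS uv fin by (subst card_Diff_subset) auto
          moreover have "card {u,v} \<le> card S" using uS vS fin by (intro card_mono) auto
          ultimately show ?thesis using uv by simp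
        qed
        have b: "real (card (IM E (S - {u,v}))) \<le> \<alpha> ^ card (S - {u,v})"
          by (rule IH) (use c2 in auto)
        have "real (card (IM E S)) = 2 * real (card (IM E (S - {u,v})))"
          using sp cT T2 IMeq by simp
        also have "\<dots> \<le> 2 * \<alpha> ^ card (S - {u,v})" using b by simp
        also have "\<dots> \<le> \<alpha>^2 * \<alpha> ^ card (S - {u,v})" using a2 a1 by (intro mult_right_mono) auto
        also have "\<dots> = \<alpha> ^ card S" using c2 by (simp add: power_add[symmetric])
        finally show ?thesis .
      next
        case False
        then obtain w where wN: "w \<in> nbhd E u" and wS: "w \<in> S" and wv: "w \<noteq> v" by auto
        have wu: "w \<noteq> u" using wN loop by (auto simp: nbhd_def)
        have sub: "T \<subseteq> S - {u,v,w}" unfolding T_def using wN vN by auto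
        have "card (S - {u,v,w}) = card S - 3" using uS vS wS uv wu wv fin
          by (subst card_Diff_subset) auto
        moreover have "card {u,v,w} \<le> card S" using uS vS wS fin by (intro card_mono) auto
        hence "3 \<le> card S" using uv wu wv by simp
        moreover have "card T \<le> card (S - {u,v,w})" using sub fin by (intro card_mono) auto
        ultimately have cT3: "card T \<le> card S - 3" by simp
        have b: "real (card (IM E T)) \<le> \<alpha> ^ card T"
          by (rule IH) (use cT3 \<open>3 \<le> card S\<close> T_def in auto)
        have b3: "\<alpha> ^ card T \<le> \<alpha> ^ (card S - 3)" using mono cT3 by blast
        obtain m where m: "card S = m + 3" using \<open>3 \<le> card S\<close> by (metis le_add_diff_inverse2)
        have "real (card (IM E S)) \<le> \<alpha> ^ card (S - {v}) + \<alpha> ^ (card S - 3)"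
          using sp cT first b b3 by simp
        also have "\<dots> = \<alpha>^(m+2) + \<alpha>^m" using cS m by simp
        also have "\<dots> = \<alpha>^m * (\<alpha>^2 + 1)" by (simp only: power_add distrib_left mult_1_right)
        also have "\<dots> = \<alpha>^card S" using m a3 by (simp add: power_add)
        finally show ?thesis .
      qed
    qed
  qed
qed


lemma num_IM: "num_induced_matchings V E = card (IM E V)"
  unfolding num_induced_matchings_def induced_matching_def sigma_rho_dominating_def IM_def
  by simp

lemma pw_decomp:
  assumes sg: "simple_graph V E" and pw: "pathwidth V E \<le> 1"
  shows "\<exists>Bs. path_decomposition V E Bs \<and> (\<forall>B\<in>set Bs. card B \<le> 2)"
proof -
  let ?P = "\<lambda>k. \<exists>Bs. path_decomposition V E Bs \<and> (\<forall>B\<in>set Bs. card B \<le> k + 1)"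
  have "?P (card V)"
  proof (intro exI conjI)
    show "path_decomposition V E [V]"
      using sg unfolding path_decomposition_def simple_graph_def by auto
  qed auto
  then have "?P (pathwidth V E)" unfolding pathwidth_def by (rule LeastI)
  then show ?thesis using pw by fastforce
qed

lemma bag_eq:
  assumes "finite B" "{a,b} \<subseteq> B" "a \<noteq> b" "card B \<le> 2"
  shows "B = {a,b}"
proof -
  have "card {a,b} = 2" using assms(3) by simp
  then show ?thesis using assms by (metis card_seteq order_refl)
qed

lemma decomp_degree:
  assumes sg: "simple_graph V E" and pd: "path_decomposition V E Bs"
    and bags: "\<forall>B\<in>set Bs. card B \<le> 2"
    and TV: "T \<subseteq> V" and Tne: "T \<noteq> {}"
  shows "\<exists>v\<in>T. \<forall>a\<in>nbhd E v \<inter> T. \<forall>b\<in>nbhd E v \<inter> T. a = b"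
proof -
  have finV: "finite V" using sg by (simp add: simple_graph_def)
  note pdu = pd[unfolded path_decomposition_def]
  have P1: "\<forall>B\<in>set Bs. B \<subseteq> V" using pdu by (rule conjunct1)
  have P2: "\<forall>v\<in>V. \<exists>i<length Bs. v \<in> Bs ! i" using pdu by (rule conjunct1[OF conjunct2])
  have P3: "\<forall>e\<in>E. \<exists>i<length Bs. e \<subseteq> Bs ! i" using pdu by (rule conjunct1[OF conjunct2[OF conjunct2]])
  have P4: "\<forall>v i j k. i \<le> j \<and> j \<le> k \<and> k < length Bs \<and> v \<in> Bs ! i \<and> v \<in> Bs ! k
        \<longrightarrow> v \<in> Bs ! j" using pdu by (rule conjunct2[OF conjunct2[OF conjunct2]])
  have bsub: "\<And>i. i < length Bs \<Longrightarrow> Bs ! i \<subseteq> V" using P1 by auto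
  have bfin: "\<And>i. i < length Bs \<Longrightarrow> finite (Bs ! i)" using bsub finV finite_subset by blast
  have bcard: "\<And>i. i < length Bs \<Longrightarrow> card (Bs ! i) \<le> 2" using bags by auto
  have cover: "\<And>x. x \<in> V \<Longrightarrow> \<exists>i<length Bs. x \<in> Bs ! i" using P2 by blast
  have ecover: "\<And>e. e \<in> E \<Longrightarrow> \<exists>i<length Bs. e \<subseteq> Bs ! i" using P3 by blast
  have conv: "\<And>x i j k. i \<le> j \<Longrightarrow> j \<le> k \<Longrightarrow> k < length Bs \<Longrightarrow> x \<in> Bs ! i \<Longrightarrow> x \<in> Bs ! k \<Longrightarrow> x \<in> Bs ! j"
    using P4 by blast
  have edge: "\<And>e. e \<in> E \<Longrightarrow> \<exists>a b. a \<noteq> b \<and> e = {a,b} \<and> a \<in> V \<and> b \<in> V"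
    using sg by (auto simp: simple_graph_def)
  define r where "r x = Max {i. i < length Bs \<and> x \<in> Bs ! i}" for x
  have rfin: "finite {i. i < length Bs \<and> x \<in> Bs ! i}" for x by auto
  have rin: "x \<in> V \<Longrightarrow> r x < length Bs \<and> x \<in> Bs ! r x" for x
  proof -
    assume "x \<in> V"
    then have "{i. i < length Bs \<and> x \<in> Bs ! i} \<noteq> {}" using cover by auto
    from Max_in[OF rfin this] show ?thesis unfolding r_def by auto
  qed
  have rge: "i < length Bs \<Longrightarrow> x \<in> Bs ! i \<Longrightarrow> i \<le> r x" for i x
    unfolding r_def by (rule Max_ge[OF rfin]) auto
  have finT: "finite T" using TV finV finite_subset by blast
  obtain v where vT: "v \<in> T" and vmin: "\<forall>x\<in>T. r v \<le> r x"
  proof -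
    have "Min (r ` T) \<in> r ` T" using finT Tne by (intro Min_in) auto
    then obtain v where "v \<in> T" "r v = Min (r ` T)" by auto
    moreover have "\<forall>x\<in>T. Min (r ` T) \<le> r x" using finT by auto
    ultimately show ?thesis using that by auto
  qed
  have nodes: "a \<in> nbhd E v \<Longrightarrow> a \<noteq> v \<and> a \<in> V \<and> v \<in> V \<and> (\<exists>i<length Bs. Bs ! i = {a,v})" for a
  proof -
    assume "a \<in> nbhd E v"
    then have e: "{a,v} \<in> E" by (simp add: nbhd_def)
    obtain x y where xy: "x \<noteq> y" "{a,v} = {x,y}" "x \<in> V" "y \<in> V" using edge[OF e] by blast
    then have av: "a \<noteq> v" "a \<in> V" "v \<in> V" by (auto simp: doubleton_eq_iff)
    obtain i where i: "i < length Bs" "{a,v} \<subseteq> Bs ! i" using ecover[OF e] by blast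
    then have "Bs ! i = {a,v}" using bag_eq[OF bfin[OF i(1)] i(2) av(1) bcard[OF i(1)]] by simp
    with av i show ?thesis by blast
  qed
  have key: "False" if ab: "a \<in> nbhd E v" "b \<in> nbhd E v" "a \<in> T" "a \<noteq> b"
     and ij: "i < length Bs" "Bs ! i = {a,v}" "j < length Bs" "Bs ! j = {b,v}" "i < j" for a b i j
  proof -
    have "j \<le> r v" using rge[of j v] ij by auto
    also have "r v \<le> r a" using vmin ab by auto
    finally have jr: "j \<le> r a" .
    have aV: "a \<in> V" using nodes ab by blast
    have "a \<in> Bs ! j" using conv[of i j "r a" a] ij jr rin[OF aV] by auto
    then show False using ij ab nodes[OF ab(1)] by auto
  qed
  show ?thesis
  proof (intro bexI[OF _ vT] ballI)
    fix a b assume a: "a \<in> nbhd E v \<inter> T" and b: "b \<in> nbhd E v \<inter> T"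
    show "a = b"
    proof (rule ccontr)
      assume ab: "a \<noteq> b"
      obtain i where i: "i < length Bs" "Bs ! i = {a,v}" using nodes a by blast
      obtain j where j: "j < length Bs" "Bs ! j = {b,v}" using nodes b by blast
      have "i \<noteq> j" using i j ab by (auto simp: doubleton_eq_iff)
      then consider "i < j" | "j < i" by linarith
      then show False
      proof cases
        case 1 then show ?thesis using key[of a b i j] a b ab i j by auto
      next
        case 2 then show ?thesis using key[of b a j i] a b ab i j by auto
      qed
    qed
  qed
qed

lemma part1:
  fixes \<alpha> :: real
  assumes a1: "1 < \<alpha>" and a3: "\<alpha>^3 = \<alpha>^2 + 1" and a2: "2 \<le> \<alpha>^2"
    and sg: "simple_graph V E" and pw: "pathwidth V E \<le> 1"
  shows "real (num_induced_matchings V E) \<le> \<alpha> ^ card V"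
proof -
  obtain Bs where pd: "path_decomposition V E Bs" and bags: "\<forall>B\<in>set Bs. card B \<le> 2"
    using pw_decomp[OF sg pw] by blast
  have loop: "\<forall>x. {x} \<notin> E"
    using sg unfolding simple_graph_def by (metis doubleton_eq_iff insert_absorb2)
  have finV: "finite V" using sg by (simp add: simple_graph_def)
  show ?thesis unfolding num_IM
    by (rule forest_bound[OF a1 a3 a2 loop, of V, OF decomp_degree[OF sg pd bags] finV order_refl])
qed


definition PE :: "nat set set" where "PE = {{i, Suc i} | i. True}"

lemma nbhd_PE: "u \<in> nbhd PE v \<longleftrightarrow> u = Suc v \<or> v = Suc u"
  unfolding nbhd_def PE_def by (auto simp: doubleton_eq_iff)

lemma path_count: "num_induced_matchings (path_V n) (path_E n) = card (IM PE {0..<n})"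
proof -
  have "IM (path_E n) {0..<n} = IM PE {0..<n}"
  proof -
    have eq: "nbhd (path_E n) v \<inter> D = nbhd PE v \<inter> D" if "D \<subseteq> {0..<n}" "v \<in> D" for D v
    proof -
      have "u \<in> nbhd (path_E n) v \<longleftrightarrow> u \<in> nbhd PE v" if "u \<in> D" for u
        using that \<open>D \<subseteq> {0..<n}\<close> \<open>v \<in> D\<close>
        unfolding nbhd_def PE_def path_E_def by (force simp: doubleton_eq_iff subset_iff)
      then show ?thesis by blast
    qed
    show ?thesis unfolding IM_def
    proof (rule Collect_cong, rule iffI)
      fix D assume "D \<subseteq> {0..<n} \<and> (\<forall>v\<in>D. card (nbhd (path_E n) v \<inter> D) = 1)"
      then show "D \<subseteq> {0..<n} \<and> (\<forall>v\<in>D. card (nbhd PE v \<inter> D) = 1)" using eq by auto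
    next
      fix D assume "D \<subseteq> {0..<n} \<and> (\<forall>v\<in>D. card (nbhd PE v \<inter> D) = 1)"
      then show "D \<subseteq> {0..<n} \<and> (\<forall>v\<in>D. card (nbhd (path_E n) v \<inter> D) = 1)" using eq by auto
    qed
  qed
  then show ?thesis by (simp add: num_IM path_V_def)
qed

lemma PE_loop: "\<forall>x. {x} \<notin> PE"
  unfolding PE_def by (auto simp: doubleton_eq_iff)

lemma path_rec:
  assumes m: "1 \<le> m"
  shows "card (IM PE {0..<Suc m}) = card (IM PE {0..<m}) + card (IM PE {0..<m - 2})"
proof -
  let ?S = "{0..<Suc m}"
  have sp: "card (IM PE ?S) = card (IM PE (?S - {m})) + card {D\<in>IM PE ?S. m \<in> D}"
    by (rule IM_split) auto
  have S1: "?S - {m} = {0..<m}" by auto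
  have Nv: "nbhd PE m \<inter> ?S = {m - 1}" using m by (auto simp: nbhd_PE)
  have sec: "{D\<in>IM PE ?S. m \<in> D} = {D\<in>IM PE ?S. m - 1 \<in> D \<and> m \<in> D}"
  proof safe
    fix D assume D: "D \<in> IM PE ?S" "m \<in> D"
    then have "card (nbhd PE m \<inter> D) = 1" "D \<subseteq> ?S" by (auto simp: IM_def)
    then have "nbhd PE m \<inter> D \<noteq> {}" by auto
    then obtain x where x: "x \<in> nbhd PE m" "x \<in> D" by blast
    then have "x \<in> nbhd PE m \<inter> ?S" using \<open>D \<subseteq> ?S\<close> by blast
    then have "x = m - 1" using Nv by simp
    then show "m - 1 \<in> D" using x by simp
  qed
  have e: "{m - 1, m} \<in> PE" unfolding PE_def using m by (auto intro!: exI[of _ "m - 1"])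
  have T: "?S - (insert (m - 1) (nbhd PE (m - 1)) \<union> insert m (nbhd PE m)) = {0..<m - 2}"
    using m by (auto simp: nbhd_PE)
  have "card {D\<in>IM PE ?S. m \<in> D} = card (IM PE {0..<m - 2})"
    unfolding sec T[symmetric] by (rule IM_pair[OF PE_loop _ _ e]) (use m in auto)
  then show ?thesis using sp S1 by simp
qed

lemma path1: "card (IM PE {0..<Suc 0}) = 1"
proof -
  have A: "card (IM PE {0..<Suc 0}) = card (IM PE ({0..<Suc 0} - {0})) + card {D\<in>IM PE {0..<Suc 0}. 0 \<in> D}"
    by (rule IM_split) auto
  have B: "{D\<in>IM PE {0..<Suc 0}. 0 \<in> D} = {}"
  proof safe
    fix D assume D: "D \<in> IM PE {0..<Suc 0}" "0 \<in> D"
    then have "nbhd PE 0 \<inter> D = {}" by (auto simp: IM_def nbhd_PE)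
    with D show "D \<in> {}" by (auto simp: IM_def)
  qed
  have C: "{0..<Suc 0} - {0} = ({}::nat set)" by auto
  show ?thesis unfolding A B C by (simp add: IM_empty)
qed

fun f :: "nat \<Rightarrow> nat" where
  "f 0 = 1" | "f (Suc 0) = 1" | "f (Suc (Suc 0)) = 2"
| "f (Suc (Suc (Suc n))) = f (Suc (Suc n)) + f n"

lemma path_f: "card (IM PE {0..<n}) = f n"
proof (induction n rule: f.induct)
  case 1 then show ?case by (simp add: IM_empty)
next
  case 2 show ?case using path1 by simp
next
  case 3
  have "card (IM PE {0..<Suc 1}) = card (IM PE {0..<1}) + card (IM PE {0..<1 - 2})"
    by (rule path_rec) simp
  then show ?case using path1 by (simp add: IM_empty)
next
  case (4 n)
  have "card (IM PE {0..<Suc (Suc (Suc n))}) = card (IM PE {0..<Suc (Suc n)}) + card (IM PE {0..<Suc (Suc n) - 2})"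
    by (rule path_rec) simp
  then show ?case using 4 by simp
qed


lemma alpha_facts:
  fixes \<alpha> :: real
  assumes "1 < \<alpha>" and "\<alpha> < 2" and "\<alpha> ^ 3 - \<alpha> ^ 2 - 1 = 0"
  shows "\<alpha>^3 = \<alpha>^2 + 1" "\<alpha> \<le> 1.4656" "2 \<le> \<alpha>^2"
proof -
  show a3: "\<alpha>^3 = \<alpha>^2 + 1" using assms(3) by simp
  have eq: "\<alpha>^2 * (\<alpha> - 1) = 1" using a3 by (simp add: algebra_simps power2_eq_square power3_eq_cube)
  show le: "\<alpha> \<le> 1.4656"
  proof (rule ccontr)
    assume "\<not> \<alpha> \<le> 1.4656"
    then have h: "\<alpha> > 1.4656" by simp
    have "(1.4656::real)^2 \<le> \<alpha>^2" using h by (intro power_mono) auto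
    moreover have "(1.4656::real) - 1 \<le> \<alpha> - 1" using h by simp
    ultimately have "(1.4656::real)^2 * (1.4656 - 1) \<le> \<alpha>^2 * (\<alpha> - 1)"
      by (intro mult_mono) auto
    then show False using eq by (simp add: power2_eq_square)
  qed
  have "\<alpha> - 1 \<le> 1/2" using le by simp
  then have "\<alpha>^2 * (\<alpha> - 1) \<le> \<alpha>^2 * (1/2)" by (intro mult_left_mono) auto
  then show "2 \<le> \<alpha>^2" using eq by simp
qed

lemma f_upper:
  fixes \<alpha> :: real
  assumes a1: "1 < \<alpha>" and a3: "\<alpha>^3 = \<alpha>^2 + 1" and a2: "2 \<le> \<alpha>^2"
  shows "real (f n) \<le> \<alpha> ^ n"
proof (induction n rule: f.induct)
  case (4 n)
  have "real (f (Suc (Suc (Suc n)))) = real (f (Suc (Suc n))) + real (f n)" by simp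
  also have "\<dots> \<le> \<alpha>^(Suc (Suc n)) + \<alpha>^n" using 4 by simp
  also have "\<dots> = \<alpha>^n * (\<alpha>^2 + 1)" by (simp add: power2_eq_square algebra_simps)
  also have "\<dots> = \<alpha>^n * \<alpha>^3" using a3 by simp
  also have "\<dots> = \<alpha>^(Suc (Suc (Suc n)))" by (simp add: power_add[symmetric] numeral_3_eq_3)
  finally show ?case .
qed (use a1 a2 in \<open>auto simp: power2_eq_square\<close>)

lemma f_lower:
  fixes \<alpha> :: real
  assumes a1: "1 < \<alpha>" and a3: "\<alpha>^3 = \<alpha>^2 + 1" and al: "\<alpha> \<le> 1.4656"
  shows "n \<ge> 8 \<Longrightarrow> 0.89 * \<alpha> ^ n \<le> real (f n)"
proof (induction n rule: less_induct)
  case (less n)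
  have pm: "\<And>k. \<alpha>^k \<le> 1.4656^k" using a1 al by (intro power_mono) auto
  have "n = 8 \<or> n = 9 \<or> n = 10 \<or> (\<exists>k. n = k + 11)" using less.prems by presburger
  then consider "n = 8" | "n = 9" | "n = 10" | k where "n = k + 11" by blast
  then show ?case
  proof cases
    case 1
    have "f 8 = 19" by (simp add: numeral_eq_Suc)
    moreover have "0.89 * (1.4656::real)^8 \<le> 19" by (simp add: power_divide)
    ultimately show ?thesis using pm[of 8] 1 by simp
  next
    case 2
    have "f 9 = 28" by (simp add: numeral_eq_Suc)
    moreover have "0.89 * (1.4656::real)^9 \<le> 28" by (simp add: power_divide)
    ultimately show ?thesis using pm[of 9] 2 by simp
  next
    case 3
    have "f 10 = 41" by (simp add: numeral_eq_Suc)
    moreover have "0.89 * (1.4656::real)^10 \<le> 41" by (simp add: power_divide)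
    ultimately show ?thesis using pm[of 10] 3 by simp
  next
    case 4
    have fe: "f (k + 11) = f (k + 10) + f (k + 8)"
      by (simp add: numeral_eq_Suc)
    have i1: "0.89 * \<alpha>^(k+10) \<le> real (f (k+10))" using less.IH[of "k+10"] 4 by simp
    have i2: "0.89 * \<alpha>^(k+8) \<le> real (f (k+8))" using less.IH[of "k+8"] 4 by simp
    have "0.89 * \<alpha>^(k+11) = 0.89 * (\<alpha>^(k+8) * \<alpha>^3)" by (simp add: power_add)
    also have "\<dots> = 0.89 * \<alpha>^(k+10) + 0.89 * \<alpha>^(k+8)"
    proof -
      have x: "\<alpha>^(k+10) = \<alpha>^(k+8) * \<alpha>^2" proof -
        have "k + 10 = (k + 8) + 2" by simp
        then show ?thesis by (metis power_add)
      qed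
      have "\<alpha>^(k+8) * \<alpha>^3 = \<alpha>^(k+8) * \<alpha>^2 + \<alpha>^(k+8)" using a3 by (simp add: distrib_left)
      then show ?thesis unfolding x by (simp add: distrib_left)
    qed
    also have "\<dots> \<le> real (f (k + 11))" using i1 i2 fe by simp
    finally show ?thesis using 4 by simp
  qed
qed

theorem mainTheorem4:
  fixes \<alpha> :: real
  assumes "1 < \<alpha>" and "\<alpha> < 2" and "\<alpha> ^ 3 - \<alpha> ^ 2 - 1 = 0"
  shows "(\<forall>(V :: 'a set) E. simple_graph V E \<and> pathwidth V E \<le> 1 \<longrightarrow>
            real (num_induced_matchings V E) \<le> \<alpha> ^ card V)
       \<and> (\<exists>g :: nat \<Rightarrow> real. g \<longlonglongrightarrow> 0 \<and>
            (\<forall>n. real (num_induced_matchings (path_V n) (path_E n)) \<ge> 0.89 * \<alpha> ^ n + g n))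
       \<and> (\<lambda>n. real (num_induced_matchings (path_V n) (path_E n))) \<in> \<Theta>(\<lambda>n. \<alpha> ^ n)"
proof -
  note af = alpha_facts[OF assms]
  have a1: "1 < \<alpha>" by fact
  have pc: "\<And>n. num_induced_matchings (path_V n) (path_E n) = f n" using path_count path_f by simp
  have P1: "\<forall>(V :: 'a set) E. simple_graph V E \<and> pathwidth V E \<le> 1 \<longrightarrow>
            real (num_induced_matchings V E) \<le> \<alpha> ^ card V"
    using part1[OF a1 af(1) af(3)] by blast
  define g where "g n = min 0 (real (f n) - 0.89 * \<alpha> ^ n)" for n
  have ev: "eventually (\<lambda>n. g n = 0) sequentially"
    unfolding eventually_sequentially g_def
    using f_lower[OF a1 af(1) af(2)] by (intro exI[of _ 8]) auto
  have P2: "\<exists>g :: nat \<Rightarrow> real. g \<longlonglongrightarrow> 0 \<and>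
            (\<forall>n. real (num_induced_matchings (path_V n) (path_E n)) \<ge> 0.89 * \<alpha> ^ n + g n)"
  proof (intro exI conjI allI)
    show "g \<longlonglongrightarrow> 0" using tendsto_eventually[OF ev] .
    fix n show "real (num_induced_matchings (path_V n) (path_E n)) \<ge> 0.89 * \<alpha> ^ n + g n"
      unfolding pc g_def by simp
  qed
  have P3: "(\<lambda>n. real (num_induced_matchings (path_V n) (path_E n))) \<in> \<Theta>(\<lambda>n. \<alpha> ^ n)"
  proof (rule bigthetaI'[of "0.89" 1])
    show "eventually (\<lambda>n. 0.89 * norm (\<alpha>^n) \<le> norm (real (num_induced_matchings (path_V n) (path_E n)))
        \<and> norm (real (num_induced_matchings (path_V n) (path_E n))) \<le> 1 * norm (\<alpha>^n)) at_top"
      unfolding eventually_at_top_linorder pc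
    proof (intro exI[of _ 8] allI impI)
      fix n :: nat assume n8: "8 \<le> n"
      have l: "0.89 * \<alpha> ^ n \<le> real (f n)" using f_lower[OF a1 af(1) af(2) n8] .
      have u: "real (f n) \<le> \<alpha> ^ n" using f_upper[OF a1 af(1) af(3)] .
      have p: "0 < \<alpha> ^ n" using a1 by simp
      have "norm (\<alpha>^n) = \<alpha>^n" using p by simp
      moreover have "norm (real (f n)) = real (f n)" by simp
      ultimately show "0.89 * norm (\<alpha>^n) \<le> norm (real (f n)) \<and> norm (real (f n)) \<le> 1 * norm (\<alpha>^n)"
        using l u by simp
    qed
  qed auto
  show ?thesis using P1 P2 P3 by blast
qed

end
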